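(* Let $L$ be an $\omega$-regular language over $\Sigma$, let $\mathcal{F}=(M,\{A^u\})$ be the periodic (respectively syntactic, recurrent) FDFA of $L$, and let $u,v\in\Sigma^*$. If $(u,v)$ is accepted by $\mathcal{F}$, then $(u,v^k)$ is accepted by $\mathcal{F}$ for every $k\geq1$.
   Context: For a complete DFA $A$ and finite word $w$, $A(w)$ is the state reached from the initial state on $w$. An FDFA is $\mathcal{F}=(M,\{A^q\}_{q\in Q})$ with $M$ a complete DFA without accepting states and each $A^q$ a complete DFA; $(u,v)$ is accepted by $\mathcal{F}$ iff $M(uv)=M(u)$ and $v\in L(A^{M(u)})$. Canonical FDFAs of an $\omega$-regular $L$: $x\sim_L y$ iff $\forall w\in\Sigma^\omega$, $xw\in L\Leftrightarrow yw\in L$. The leading automaton has states the classes of $\sim_L$, initial state $[\epsilon]$, transitions $[x]\xrightarrow{a}[xa]$. For each state with representative $u$: $x\approx^u_P y$ iff $\forall v\in\Sigma^*$: $u(xv)^\omega\in L\Leftrightarrow u(yv)^\omega\in L$; $x\approx^u_S y$ iff $ux\sim_L uy$ and $\forall v$: $uxv\sim_L u\Rightarrow(u(xv)^\omega\in L\Leftrightarrow u(yv)^\omega\in L)$; $x\approx^u_R y$ iff $\forall v$: $(uxv\sim_L u\wedge u(xv)^\omega\in L)\Leftrightarrow(uyv\sim_L u\wedge u(yv)^\omega\in L)$. For $K\in\{P,S,R\}$ the progress automaton $A^u$ has states the classes of $\approx^u_K$, initial state $[\epsilon]$, transitions $[x]\xrightarrow{a}[xa]$, and accepting states the classes $[v]$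 with $uv^\omega\in L$ ($K=P$), resp. with $uv\sim_L u$ and $uv^\omega\in L$ ($K\in\{S,R\}$). These are the periodic ($P$), syntactic ($S$) and recurrent ($R$) FDFAs of $L$. *)

theory Defs
  imports "HOL-Library.Omega_Words_Fun"
begin

definition buchi_accepts ::
  "nat set \<Rightarrow> (nat \<Rightarrow> 'a \<Rightarrow> nat set) \<Rightarrow> nat set \<Rightarrow> 'a word \<Rightarrow> bool" where
  "buchi_accepts I \<delta> F w \<longleftrightarrow>
     (\<exists>r :: nat \<Rightarrow> nat. r 0 \<in> I \<and> (\<forall>i. r (Suc i) \<in> \<delta> (r i) (w i)) \<and> (\<exists>\<^sub>\<infinity>i. r i \<in> F))"

definition omega_regular :: "'a word set \<Rightarrow> bool" where
  "omega_regular L \<longleftrightarrow>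
     (\<exists>(Q::nat set) I \<delta> F. finite Q \<and> I \<subseteq> Q \<and> F \<subseteq> Q \<and> (\<forall>q a. \<delta> q a \<subseteq> Q) \<and>
        L = {w. buchi_accepts I \<delta> F w})"

record ('q, 'a) dfa =
  dfa_init :: 'q
  dfa_delta :: "'q \<Rightarrow> 'a \<Rightarrow> 'q"
  dfa_acc :: "'q set"

definition dfa_run :: "('q, 'a) dfa \<Rightarrow> 'a list \<Rightarrow> 'q" where
  "dfa_run A w = foldl (dfa_delta A) (dfa_init A) w"

definition dfa_lang :: "('q, 'a) dfa \<Rightarrow> 'a list set" where
  "dfa_lang A = {w. dfa_run A w \<in> dfa_acc A}"

record ('q, 'p, 'a) fdfa =
  fdfa_lead :: "('q, 'a) dfa"
  fdfa_prog :: "'q \<Rightarrow> ('p, 'a) dfa"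

definition fdfa_accepts :: "('q, 'p, 'a) fdfa \<Rightarrow> 'a list \<Rightarrow> 'a list \<Rightarrow> bool" where
  "fdfa_accepts \<F> u v \<longleftrightarrow>
     dfa_run (fdfa_lead \<F>) (u @ v) = dfa_run (fdfa_lead \<F>) u \<and>
     v \<in> dfa_lang (fdfa_prog \<F> (dfa_run (fdfa_lead \<F>) u))"

definition sim :: "'a word set \<Rightarrow> 'a list \<Rightarrow> 'a list \<Rightarrow> bool" where
  "sim L x y \<longleftrightarrow> (\<forall>w. x \<frown> w \<in> L \<longleftrightarrow> y \<frown> w \<in> L)"

definition rep :: "'a list set \<Rightarrow> 'a list" where
  "rep C = (SOME x. x \<in> C)"

definition leading :: "'a word set \<Rightarrow> ('a list set, 'a) dfa" where
  "leading L = \<lparr> dfa_init = {y. sim L [] y},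
                 dfa_delta = (\<lambda>C a. {y. sim L (rep C @ [a]) y}),
                 dfa_acc = {} \<rparr>"

datatype fdfa_kind = Periodic | Syntactic | Recurrent

definition approx :: "fdfa_kind \<Rightarrow> 'a word set \<Rightarrow> 'a list \<Rightarrow> 'a list \<Rightarrow> 'a list \<Rightarrow> bool" where
  "approx K L u x y = (case K of
     Periodic \<Rightarrow> (\<forall>v. u \<frown> iter (x @ v) \<in> L \<longleftrightarrow> u \<frown> iter (y @ v) \<in> L)
   | Syntactic \<Rightarrow> sim L (u @ x) (u @ y) \<and>
        (\<forall>v. sim L (u @ x @ v) u \<longrightarrow> (u \<frown> iter (x @ v) \<in> L \<longleftrightarrow> u \<frown> iter (y @ v) \<in> L))
   | Recurrent \<Rightarrow> (\<forall>v. (sim L (u @ x @ v) u \<and> u \<frown> iter (x @ v) \<in> L) \<longleftrightarrow>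
                      (sim L (u @ y @ v) u \<and> u \<frown> iter (y @ v) \<in> L)))"

definition prog_acc_cond :: "fdfa_kind \<Rightarrow> 'a word set \<Rightarrow> 'a list \<Rightarrow> 'a list \<Rightarrow> bool" where
  "prog_acc_cond K L u v = (case K of
     Periodic \<Rightarrow> u \<frown> iter v \<in> L
   | _ \<Rightarrow> sim L (u @ v) u \<and> u \<frown> iter v \<in> L)"

definition progress :: "fdfa_kind \<Rightarrow> 'a word set \<Rightarrow> 'a list \<Rightarrow> ('a list set, 'a) dfa" where
  "progress K L u = \<lparr> dfa_init = {y. approx K L u [] y},
                      dfa_delta = (\<lambda>C a. {y. approx K L u (rep C @ [a]) y}),
                      dfa_acc = {{y. approx K L u v y} | v. prog_acc_cond K L u v} \<rparr>"

definition canonical_fdfa :: "fdfa_kind \<Rightarrow> 'a word set \<Rightarrow> ('a list set, 'a list set, 'a) fdfa" where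
  "canonical_fdfa K L = \<lparr> fdfa_lead = leading L, fdfa_prog = (\<lambda>q. progress K L (rep q)) \<rparr>"

end

theory Submission
  imports Defs
begin

lemma sim_refl: "sim L x x" by (simp add: sim_def)
lemma sim_sym: "sim L x y \<Longrightarrow> sim L y x" by (simp add: sim_def)
lemma sim_trans: "sim L x y \<Longrightarrow> sim L y z \<Longrightarrow> sim L x z" by (simp add: sim_def)
lemma sim_app: "sim L x y \<Longrightarrow> sim L (x @ z) (y @ z)"
  unfolding sim_def by (metis conc_conc)

lemma rep_in: "x \<in> C \<Longrightarrow> rep C \<in> C"
  unfolding rep_def by (metis someI)

lemma lead_run: "dfa_run (leading L) w = {y. sim L w y}"
proof (induction w rule: rev_induct)
  case Nil then show ?case by (simp add: dfa_run_def leading_def)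
next
  case (snoc a w)
  have "dfa_run (leading L) (w @ [a]) = {y. sim L (rep {y. sim L w y} @ [a]) y}"
    using snoc by (simp add: dfa_run_def leading_def)
  moreover have "sim L (rep {y. sim L w y}) w"
    using rep_in[of w "{y. sim L w y}"] by (auto simp: sim_refl intro: sim_sym)
  hence "sim L (rep {y. sim L w y} @ [a]) (w @ [a])" by (rule sim_app)
  ultimately show ?case by (auto intro: sim_trans sim_sym)
qed

lemma approx_refl: "approx K L u x x"
  by (cases K) (auto simp: approx_def sim_refl)

lemma approx_sym: "approx K L u x y \<Longrightarrow> approx K L u y x"
proof (cases K)
  case Syntactic
  assume h: "approx K L u x y"
  have s: "sim L (u @ x) (u @ y)" and q: "\<And>v. sim L (u @ x @ v) u \<Longrightarrow> (u \<frown> iter (x @ v) \<in> L \<longleftrightarrow> u \<frown> iter (y @ v) \<in> L)"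
    using h Syntactic by (auto simp: approx_def)
  have "sim L (u @ x @ v) u" if "sim L (u @ y @ v) u" for v
    using sim_app[OF s, of v] that by (auto intro: sim_trans)
  with s q show ?thesis using Syntactic by (auto simp: approx_def intro: sim_sym)
qed (auto simp: approx_def)
lemma approx_trans: "approx K L u x y \<Longrightarrow> approx K L u y z \<Longrightarrow> approx K L u x z"
proof (cases K)
  case Syntactic
  assume h: "approx K L u x y" "approx K L u y z"
  have s: "sim L (u @ x) (u @ y)" and q: "\<And>v. sim L (u @ x @ v) u \<Longrightarrow> (u \<frown> iter (x @ v) \<in> L \<longleftrightarrow> u \<frown> iter (y @ v) \<in> L)"
    using h Syntactic by (auto simp: approx_def)
  have s2: "sim L (u @ y) (u @ z)" and q2: "\<And>v. sim L (u @ y @ v) u \<Longrightarrow> (u \<frown> iter (y @ v) \<in> L \<longleftrightarrow> u \<frown> iter (z @ v) \<in> L)"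
    using h Syntactic by (auto simp: approx_def)
  have "sim L (u @ y @ v) u" if "sim L (u @ x @ v) u" for v
    using sim_app[OF s, of v] that by (auto intro: sim_trans sim_sym)
  with s q s2 q2 show ?thesis using Syntactic by (auto simp: approx_def intro: sim_trans)
qed (auto simp: approx_def)
lemma approx_app: "approx K L u x y \<Longrightarrow> approx K L u (x @ [a]) (y @ [a])"
proof (cases K)
  case Syntactic
  assume h: "approx K L u x y"
  have s: "sim L (u @ x) (u @ y)" and q: "\<And>v. sim L (u @ x @ v) u \<Longrightarrow> (u \<frown> iter (x @ v) \<in> L \<longleftrightarrow> u \<frown> iter (y @ v) \<in> L)"
    using h Syntactic by (auto simp: approx_def)
  show ?thesis using Syntactic sim_app[OF s, of "[a]"] q[of "a # _"] by (auto simp: approx_def)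
next
  case Periodic
  assume h: "approx K L u x y"
  then show ?thesis using Periodic by (auto simp: approx_def)
next
  case Recurrent
  assume h: "approx K L u x y"
  then show ?thesis using Recurrent unfolding approx_def by simp
qed

lemma prog_run: "dfa_run (progress K L u) w = {y. approx K L u w y}"
proof (induction w rule: rev_induct)
  case Nil then show ?case by (simp add: dfa_run_def progress_def)
next
  case (snoc a w)
  have "dfa_run (progress K L u) (w @ [a]) = {y. approx K L u (rep {y. approx K L u w y} @ [a]) y}"
    using snoc by (simp add: dfa_run_def progress_def)
  moreover have "approx K L u (rep {y. approx K L u w y}) w"
    using rep_in[of w "{y. approx K L u w y}"] by (auto simp: approx_refl intro: approx_sym)
  hence "approx K L u (rep {y. approx K L u w y} @ [a]) (w @ [a])" by (rule approx_app)
  ultimately show ?case by (auto intro: approx_trans approx_sym)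
qed

lemma cond_resp: "approx K L u w v \<Longrightarrow> prog_acc_cond K L u v \<Longrightarrow> prog_acc_cond K L u w"
proof (cases K)
  case Periodic
  assume "approx K L u w v" "prog_acc_cond K L u v"
  then have a: "\<forall>va. u \<frown> iter (w @ va) \<in> L \<longleftrightarrow> u \<frown> iter (v @ va) \<in> L" and "u \<frown> iter v \<in> L"
    using Periodic unfolding approx_def prog_acc_cond_def by simp_all
  moreover have "u \<frown> iter (w @ []) \<in> L \<longleftrightarrow> u \<frown> iter (v @ []) \<in> L"
    using a by (rule spec)
  ultimately have "u \<frown> iter (w @ []) \<in> L \<longleftrightarrow> u \<frown> iter (v @ []) \<in> L" "u \<frown> iter v \<in> L"
    by simp_all
  then show ?thesis using Periodic by (simp add: prog_acc_cond_def)
next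
  case Syntactic
  assume h: "approx K L u w v" "prog_acc_cond K L u v"
  then have s: "sim L (u @ w) (u @ v)" and q0: "\<forall>va. sim L (u @ w @ va) u \<longrightarrow> (u \<frown> iter (w @ va) \<in> L \<longleftrightarrow> u \<frown> iter (v @ va) \<in> L)"
    and c: "sim L (u @ v) u" "u \<frown> iter v \<in> L"
    using Syntactic by (auto simp: approx_def prog_acc_cond_def)
  have q: "sim L (u @ w @ []) u \<longrightarrow> (u \<frown> iter (w @ []) \<in> L \<longleftrightarrow> u \<frown> iter (v @ []) \<in> L)"
    using q0 by (rule spec)
  have "sim L (u @ w) u" using s c(1) by (rule sim_trans)
  then show ?thesis using q c Syntactic by (auto simp: prog_acc_cond_def)
next
  case Recurrent
  assume h: "approx K L u w v" "prog_acc_cond K L u v"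
  then have "\<forall>va. (sim L (u @ w @ va) u \<and> u \<frown> iter (w @ va) \<in> L) \<longleftrightarrow> (sim L (u @ v @ va) u \<and> u \<frown> iter (v @ va) \<in> L)"
    using Recurrent unfolding approx_def by simp
  then have "(sim L (u @ w @ []) u \<and> u \<frown> iter (w @ []) \<in> L) \<longleftrightarrow> (sim L (u @ v @ []) u \<and> u \<frown> iter (v @ []) \<in> L)"
    by (rule spec)
  then show ?thesis using h(2) Recurrent by (simp add: prog_acc_cond_def)
qed

lemma prog_lang: "w \<in> dfa_lang (progress K L u) \<longleftrightarrow> prog_acc_cond K L u w"
proof
  assume "w \<in> dfa_lang (progress K L u)"
  then obtain v where v: "prog_acc_cond K L u v" "{y. approx K L u w y} = {y. approx K L u v y}"
    unfolding dfa_lang_def prog_run by (auto simp: progress_def)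
  have "approx K L u w v" using v(2) approx_refl[of K L u v] by blast
  thus "prog_acc_cond K L u w" using v(1) cond_resp by blast
next
  assume "prog_acc_cond K L u w"
  thus "w \<in> dfa_lang (progress K L u)"
    unfolding dfa_lang_def prog_run by (auto simp: progress_def)
qed

lemma nth_concat_rep: "i < k * length v \<Longrightarrow> concat (replicate k v) ! i = v ! (i mod length v)"
proof (induction k arbitrary: i)
  case 0 then show ?case by simp
next
  case (Suc k)
  show ?case
  proof (cases "i < length v")
    case True then show ?thesis by (simp add: nth_append)
  next
    case False
    hence "concat (replicate (Suc k) v) ! i = v ! ((i - length v) mod length v)"
      using Suc by (simp add: nth_append)
    also have "(i - length v) mod length v = i mod length v"
      using False by (simp add: le_mod_geq)
    finally show ?thesis .
  qed
qed

lemma iter_rep: "v \<noteq> [] \<Longrightarrow> k \<ge> 1 \<Longrightarrow> iter (concat (replicate k v)) = iter v"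
proof -
  assume v: "v \<noteq> []" and k: "k \<ge> 1"
  have len: "length (concat (replicate k v)) = k * length v" by (simp add: length_concat sum_list_replicate)
  have ne: "concat (replicate k v) \<noteq> []" using v k len by (metis length_0_conv mult_is_0 not_one_le_zero)
  show ?thesis
  proof
    fix n
    have pos: "0 < k * length v" using v k by simp
    have "iter (concat (replicate k v)) n = concat (replicate k v) ! (n mod (k * length v))"
      using ne len by simp
    also have "\<dots> = v ! ((n mod (k * length v)) mod length v)"
      using pos by (intro nth_concat_rep) simp
    also have "(n mod (k * length v)) mod length v = n mod length v"
      by (simp add: mod_mod_cancel)
    finally show "iter (concat (replicate k v)) n = iter v n" using v by simp
  qed
qed

lemma sim_pow: "sim L (u @ v) u \<Longrightarrow> sim L (u @ concat (replicate k v)) u"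
proof (induction k)
  case 0 then show ?case by (simp add: sim_refl)
next
  case (Suc k)
  have "sim L (u @ v @ concat (replicate k v)) (u @ concat (replicate k v))"
    using sim_app[OF Suc.prems] by simp
  with Suc show ?case by (auto intro: sim_trans)
qed

theorem proposition1:
  fixes L :: "('a::finite) word set" and K :: fdfa_kind and u v :: "'a list"
  assumes "omega_regular L"
    and "fdfa_accepts (canonical_fdfa K L) u v"
  shows "\<forall>k\<ge>1. fdfa_accepts (canonical_fdfa K L) u (concat (replicate k v))"
proof (intro allI impI)
  fix k :: nat assume k: "k \<ge> 1"
  define r where "r = rep {y. sim L u y}"
  have ru: "sim L r u"
    using rep_in[of u "{y. sim L u y}"] by (auto simp: r_def sim_refl intro: sim_sym)
  have A: "{y. sim L (u @ v) y} = {y. sim L u y}" and B: "prog_acc_cond K L r v"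
    using assms(2) by (auto simp: fdfa_accepts_def canonical_fdfa_def lead_run prog_lang r_def)
  have suv: "sim L (u @ v) u" using A sim_refl[of L u] by blast
  have suvk: "sim L (u @ concat (replicate k v)) u" by (rule sim_pow[OF suv])
  hence A': "{y. sim L (u @ concat (replicate k v)) y} = {y. sim L u y}"
    by (auto intro: sim_trans sim_sym)
  have srv: "sim L (r @ v) r"
    by (meson ru suv sim_app sim_trans sim_sym)
  have B': "prog_acc_cond K L r (concat (replicate k v))"
  proof (cases "v = []")
    case True then show ?thesis using B by simp
  next
    case False
    then show ?thesis using B sim_pow[OF srv, of k] iter_rep[OF False k]
      by (cases K) (auto simp: prog_acc_cond_def)
  qed
  show "fdfa_accepts (canonical_fdfa K L) u (concat (replicate k v))"
    using A' B' by (simp add: fdfa_accepts_def canonical_fdfa_def lead_run prog_lang r_def)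
qed

end
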